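(* Let $\Omega\subset\mathbb{R}^2$ be open and $\gamma:\Omega\to\mathbb{R}^2$ a smooth map satisfying $\gamma_{,tt}=\gamma_{,ss}$, $\langle\gamma_{,t},\gamma_{,s}\rangle = 0$ and $|\gamma_{,t}|^2+|\gamma_{,s}|^2=1$, and let $\mathcal{S}$ be the ``timelike maximal'' surface $\{(t,\gamma(t,s))\}\subset\mathbb{R}^{1+2}$. Suppose $(t_0,s_0)\in\Omega$ satisfies $\gamma_{,s}(t_0,s_0)=0$ (so $\gamma(t_0,s_0)$ is a singular point of $\mathcal{S}$) and $\gamma_{,ss}(t_0,s_0)\neq0$. Then locally around $(t_0,s_0)$, the singularities of $\mathcal{S}$ (the points where $\gamma_{,s}=0$) are cusps of the time slices $s\mapsto\gamma(t,s)$ and propagate along the null curve $t\mapsto(t,\gamma(t,S(t)))$, where $S$ solves \[ S'(t) = -\frac{\langle\gamma_{,ss}(t,S(t)),\gamma_{,ts}(t,S(t))\rangle}{|\gamma_{,ss}(t,S(t))|^2},\qquad S(t_0)=s_0. \]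
   Context: $\mathbb{R}^{1+2}$ is Minkowski space with metric $-dt^2+|dx|^2$; subscripts after commas denote partial derivatives; $\langle\cdot,\cdot\rangle$ is the Euclidean inner product on $\mathbb{R}^2$. *)

theory Defs
  imports "HOL-Analysis.Analysis"
begin

definition pd_t :: "(real \<times> real \<Rightarrow> 'a::real_normed_vector) \<Rightarrow> real \<times> real \<Rightarrow> 'a" where
  "pd_t f p = vector_derivative (\<lambda>\<tau>. f (\<tau>, snd p)) (at (fst p))"

definition pd_s :: "(real \<times> real \<Rightarrow> 'a::real_normed_vector) \<Rightarrow> real \<times> real \<Rightarrow> 'a" where
  "pd_s f p = vector_derivative (\<lambda>\<sigma>. f (fst p, \<sigma>)) (at (snd p))"

inductive_set iterated_partials :: "(real \<times> real \<Rightarrow> 'a::real_normed_vector) \<Rightarrow> (real \<times> real \<Rightarrow> 'a) set"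
  for f where
    base: "f \<in> iterated_partials f"
  | dt: "g \<in> iterated_partials f \<Longrightarrow> pd_t g \<in> iterated_partials f"
  | ds: "g \<in> iterated_partials f \<Longrightarrow> pd_s g \<in> iterated_partials f"

definition smooth_on :: "(real \<times> real) set \<Rightarrow> (real \<times> real \<Rightarrow> 'a::real_normed_vector) \<Rightarrow> bool" where
  "smooth_on \<Omega> f \<longleftrightarrow>
     (\<forall>g \<in> iterated_partials f. continuous_on \<Omega> g \<and>
        (\<forall>p \<in> \<Omega>. (\<lambda>\<tau>. g (\<tau>, snd p)) differentiable (at (fst p)) \<and>
                   (\<lambda>\<sigma>. g (fst p, \<sigma>)) differentiable (at (snd p))))"

definition mink_q :: "real \<times> (real^2) \<Rightarrow> real" where
  "mink_q v = - (fst v)\<^sup>2 + (norm (snd v))\<^sup>2"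

definition null_curve_on :: "real set \<Rightarrow> (real \<Rightarrow> real \<times> (real^2)) \<Rightarrow> bool" where
  "null_curve_on I c \<longleftrightarrow>
     (\<forall>t \<in> I. c differentiable (at t) \<and> vector_derivative c (at t) \<noteq> 0 \<and>
               mink_q (vector_derivative c (at t)) = 0)"

text \<open>A planar curve c has a cusp at s0: c is differentiable near s0, its velocity vanishes
  at s0 and nowhere else nearby, and the unit tangent has opposite (nonzero) one-sided
  limits at s0, i.e. the curve arrives and departs along the same line, reversing direction.\<close>

definition cusp_at :: "(real \<Rightarrow> real^2) \<Rightarrow> real \<Rightarrow> bool" where
  "cusp_at c s0 \<longleftrightarrow>
     (\<exists>e>0. (\<forall>s \<in> ball s0 e. c differentiable (at s)) \<and>
            vector_derivative c (at s0) = 0 \<and>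
            (\<forall>s \<in> ball s0 e - {s0}. vector_derivative c (at s) \<noteq> 0) \<and>
            (\<exists>u. u \<noteq> 0 \<and>
               ((\<lambda>s. vector_derivative c (at s) /\<^sub>R norm (vector_derivative c (at s)))
                   \<longlongrightarrow> u) (at_right s0) \<and>
               ((\<lambda>s. vector_derivative c (at s) /\<^sub>R norm (vector_derivative c (at s)))
                   \<longlongrightarrow> - u) (at_left s0)))"

end

theory Submission
  imports Defs
begin

lemma vd_inner:
  fixes a b :: "real \<Rightarrow> 'a::real_inner"
  assumes "(a has_vector_derivative a') (at x)" "(b has_vector_derivative b') (at x)"
  shows "((\<lambda>x. a x \<bullet> b x) has_real_derivative (a' \<bullet> b x + a x \<bullet> b')) (at x)"
proof -
  have "((\<lambda>x. a x \<bullet> b x) has_derivative (\<lambda>h. a x \<bullet> (h *\<^sub>R b') + (h *\<^sub>R a') \<bullet> b x)) (at x)"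
    using has_derivative_inner[OF assms[unfolded has_vector_derivative_def]] .
  then show ?thesis unfolding has_field_derivative_def
    by (rule has_derivative_eq_rhs) (auto simp: algebra_simps)
qed

definition rot :: "real^2 \<Rightarrow> real^2" where "rot v = vector [v$2, -(v$1)]"

lemma rot_lin: "bounded_linear rot"
proof -
  have "linear rot" by (rule linearI) (auto simp: rot_def vec_eq_iff forall_2)
  then show ?thesis by (simp add: linear_conv_bounded_linear)
qed

lemma inner2: "(a::real^2) \<bullet> b = a$1*b$1 + a$2*b$2"
  by (simp add: inner_vec_def sum_2)

lemma norm2sq: "(norm (a::real^2))\<^sup>2 = (a$1)\<^sup>2 + (a$2)\<^sup>2"
  by (simp only: power2_norm_eq_inner inner2) (simp add: power2_eq_square)

lemma rot_inner: "a \<bullet> rot b = a$1*b$2 - a$2*b$1"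
  by (simp add: inner2 rot_def)

lemma lagr: "(a \<bullet> b)\<^sup>2 + (a \<bullet> rot b)\<^sup>2 = (norm a)\<^sup>2 * (norm (b::real^2))\<^sup>2"
  unfolding rot_inner norm2sq by (simp add: inner2 power2_eq_square algebra_simps)

lemma zero_of_perp:
  assumes "a \<bullet> b = 0" "a \<bullet> rot b = 0" "b \<noteq> (0::real^2)" shows "a = 0"
  using lagr[of a b] assms by simp

lemma final_alg:
  fixes gt gss gst :: "real^2"
  assumes "gt \<bullet> gss = 0" "(norm gt)\<^sup>2 = 1" "gss \<bullet> rot gt \<noteq> 0"
  shows "gst \<bullet> rot gt / (gss \<bullet> rot gt) = (gss \<bullet> gst) / (norm gss)\<^sup>2"
proof -
  have ns: "(norm gss)\<^sup>2 = (gss \<bullet> rot gt)\<^sup>2" using lagr[of gss gt] assms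
    by (simp add: inner_commute)
  have e1: "(gt$1)^2 + (gt$2)^2 = 1" using assms(2) by (simp add: norm2sq)
  have e0: "gt$1*gss$1 + gt$2*gss$2 = 0" using assms(1) by (simp add: inner2)
  have key: "(gst$1*gt$2 - gst$2*gt$1)*(gss$1*gt$2 - gss$2*gt$1) = gss$1*gst$1 + gss$2*gst$2"
  proof -
    let ?a = "gt$1" and ?b = "gt$2" and ?x = "gss$1" and ?y = "gss$2" and ?p = "gst$1" and ?q = "gst$2"
    have "(?p*?b - ?q*?a)*(?x*?b - ?y*?a) = ?p*?x*?b^2 + ?q*?y*?a^2 - (?p*?y + ?q*?x)*?a*?b"
      by (simp add: algebra_simps power2_eq_square)
    also have "... = (?p*?x + ?q*?y)*(?a^2+?b^2) - (?a*?x+?b*?y)*(?p*?a+?q*?b)"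
      by (simp add: algebra_simps power2_eq_square)
    also have "... = ?p*?x + ?q*?y" using e0 e1 by simp
    finally show ?thesis by (simp add: algebra_simps)
  qed
  have "(gst \<bullet> rot gt) * (gss \<bullet> rot gt) = (gss \<bullet> gst)"
    unfolding rot_inner inner2[of gss gst] using key by simp
  then show ?thesis using assms(3) ns by (simp add: field_simps power2_eq_square)
qed

lemma mvt_btw:
  fixes f f' :: "real \<Rightarrow> real"
  assumes "\<And>x. min a b \<le> x \<Longrightarrow> x \<le> max a b \<Longrightarrow> (f has_real_derivative f' x) (at x)"
  shows "\<exists>z. min a b \<le> z \<and> z \<le> max a b \<and> f b - f a = (b - a) * f' z"
proof (cases a b rule: linorder_cases)
  case less
  then obtain z where "z > a" "z < b" "f b - f a = (b - a) * f' z"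
    using MVT2[of a b f f'] assms by auto
  then show ?thesis using less by (intro exI[of _ z]) auto
next
  case equal then show ?thesis by auto
next
  case greater
  then obtain z where "z > b" "z < a" "f a - f b = (a - b) * f' z"
    using MVT2[of b a f f'] assms by auto
  then show ?thesis using greater by (intro exI[of _ z]) (auto simp: algebra_simps)
qed

lemma dist_pair_le: "dist (x,y) (t::real,s::real) \<le> \<bar>x - t\<bar> + \<bar>y - s\<bar>"
  unfolding dist_Pair_Pair dist_real_def using sqrt_sum_squares_le_sum_abs[of "\<bar>x-t\<bar>" "\<bar>y-s\<bar>"] by simp

lemma cont_ev:
  fixes g :: "real \<times> real \<Rightarrow> real"
  assumes "continuous_on U g" "open U" "p \<in> U" "g p < c"
  shows "\<exists>d>0. \<forall>q. dist q p < d \<longrightarrow> q \<in> U \<and> g q < c"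
proof -
  have "isCont g p" using assms continuous_on_eq_continuous_at by blast
  then obtain d1 where d1: "d1 > 0" "\<And>q. dist q p < d1 \<Longrightarrow> dist (g q) (g p) < c - g p"
    unfolding continuous_at_eps_delta using assms(4) by (meson diff_gt_0_iff_gt)
  obtain d2 where d2: "d2 > 0" "ball p d2 \<subseteq> U" using assms(2,3) openE by blast
  show ?thesis
  proof (intro exI[of _ "min d1 d2"] conjI allI impI)
    fix q assume "dist q p < min d1 d2"
    then have "dist q p < d1" "dist q p < d2" by auto
    then show "q \<in> U" "g q < c" using d1(2)[of q] d2 by (auto simp: dist_commute dist_real_def)
  qed (use d1 d2 in auto)
qed

lemma cont_ev_gt:
  fixes g :: "real \<times> real \<Rightarrow> real"
  assumes "continuous_on U g" "open U" "p \<in> U" "g p > c"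
  shows "\<exists>d>0. \<forall>q. dist q p < d \<longrightarrow> q \<in> U \<and> g q > c"
  using cont_ev[of U "\<lambda>q. - g q" p "-c"] assms continuous_on_minus by fastforce

lemma schwarz_lt:
  fixes f ft fs fts fst :: "real \<times> real \<Rightarrow> real"
  assumes U: "open U" "p \<in> U"
    and dft: "\<And>x y. (x,y)\<in>U \<Longrightarrow> ((\<lambda>x. f (x, y)) has_real_derivative ft (x,y)) (at x)"
    and dfs: "\<And>x y. (x,y)\<in>U \<Longrightarrow> ((\<lambda>y. f (x, y)) has_real_derivative fs (x,y)) (at y)"
    and dfts: "\<And>x y. (x,y)\<in>U \<Longrightarrow> ((\<lambda>y. ft (x, y)) has_real_derivative fts (x,y)) (at y)"
    and dfst: "\<And>x y. (x,y)\<in>U \<Longrightarrow> ((\<lambda>x. fs (x, y)) has_real_derivative fst (x,y)) (at x)"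
    and c1: "continuous_on U fts" and c2: "continuous_on U fst"
  shows "\<not> fts p < fst p"
proof
  assume lt: "fts p < fst p"
  define c where "c = (fts p + fst p) / 2"
  obtain d1 where d1: "d1 > 0" "\<And>q. dist q p < d1 \<Longrightarrow> q \<in> U \<and> fts q < c"
    using cont_ev[OF c1 U, of c] lt unfolding c_def by auto
  obtain d2 where d2: "d2 > 0" "\<And>q. dist q p < d2 \<Longrightarrow> q \<in> U \<and> fst q > c"
    using cont_ev_gt[OF c2 U, of c] lt unfolding c_def by auto
  obtain t s where p: "p = (t, s)" by (cases p)
  define h where "h = min d1 d2 / 3"
  have h: "h > 0" using d1 d2 by (simp add: h_def)
  have box: "q \<in> U \<and> fts q < c \<and> fst q > c" if "t \<le> x" "x \<le> t + h" "s \<le> y" "y \<le> s + h" "q = (x,y)" for x y q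
  proof -
    have "dist (x,y) (t,s) \<le> \<bar>x - t\<bar> + \<bar>y - s\<bar>" by (rule dist_pair_le)
    also have "... \<le> 2 * h" using that by auto
    also have "... < min d1 d2" using h d1(1) d2(1) unfolding h_def by linarith
    finally show ?thesis using d1(2)[of q] d2(2)[of q] that p by auto
  qed
  define D where "D = f (t+h, s+h) - f (t+h, s) - f (t, s+h) + f (t, s)"
  obtain \<xi> where \<xi>: "t \<le> \<xi>" "\<xi> \<le> t + h"
    "(\<lambda>x. f (x, s+h) - f (x, s)) (t+h) - (\<lambda>x. f (x, s+h) - f (x, s)) t
      = ((t+h) - t) * (ft (\<xi>, s+h) - ft (\<xi>, s))"
  proof -
    have "\<exists>z. min t (t+h) \<le> z \<and> z \<le> max t (t+h) \<and>
      (\<lambda>x. f (x, s+h) - f (x, s)) (t+h) - (\<lambda>x. f (x, s+h) - f (x, s)) t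
      = ((t+h) - t) * (\<lambda>x. ft (x, s+h) - ft (x, s)) z"
    proof (rule mvt_btw)
      fix x assume "min t (t + h) \<le> x" "x \<le> max t (t + h)"
      then have x: "t \<le> x" "x \<le> t + h" using h by auto
      have "(x, s+h) \<in> U" "(x, s) \<in> U" using box[OF x, of "s+h"] box[OF x, of s] h by auto
      then show "((\<lambda>x. f (x, s + h) - f (x, s)) has_real_derivative ft (x, s + h) - ft (x, s)) (at x)"
        using dft[of x "s+h"] dft[of x s] by (intro derivative_intros) auto
    qed
    then show ?thesis using that h by auto
  qed
  obtain \<eta> where \<eta>: "s \<le> \<eta>" "\<eta> \<le> s + h" "ft (\<xi>, s+h) - ft (\<xi>, s) = ((s+h) - s) * fts (\<xi>, \<eta>)"
  proof -
    have "\<exists>z. min s (s+h) \<le> z \<and> z \<le> max s (s+h) \<and>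
      (\<lambda>y. ft (\<xi>, y)) (s+h) - (\<lambda>y. ft (\<xi>, y)) s = ((s+h) - s) * (\<lambda>y. fts (\<xi>, y)) z"
    proof (rule mvt_btw)
      fix y assume "min s (s + h) \<le> y" "y \<le> max s (s + h)"
      then have y: "s \<le> y" "y \<le> s + h" using h by auto
      have "(\<xi>, y) \<in> U" using box[OF \<xi>(1,2) y] by auto
      then show "((\<lambda>y. ft (\<xi>, y)) has_real_derivative fts (\<xi>, y)) (at y)"
        using dfts by blast
    qed
    then show ?thesis using that h by auto
  qed
  have "fts (\<xi>, \<eta>) < c" using box[OF \<xi>(1,2) \<eta>(1,2)] by auto
  then have D1: "D < h * h * c" using \<xi>(3) \<eta>(3) h unfolding D_def by (simp add: algebra_simps)
  obtain \<eta>' where \<eta>': "s \<le> \<eta>'" "\<eta>' \<le> s + h"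
    "(\<lambda>y. f (t+h, y) - f (t, y)) (s+h) - (\<lambda>y. f (t+h, y) - f (t, y)) s
      = ((s+h) - s) * (fs (t+h, \<eta>') - fs (t, \<eta>'))"
  proof -
    have "\<exists>z. min s (s+h) \<le> z \<and> z \<le> max s (s+h) \<and>
      (\<lambda>y. f (t+h, y) - f (t, y)) (s+h) - (\<lambda>y. f (t+h, y) - f (t, y)) s
      = ((s+h) - s) * (\<lambda>y. fs (t+h, y) - fs (t, y)) z"
    proof (rule mvt_btw)
      fix y assume "min s (s + h) \<le> y" "y \<le> max s (s + h)"
      then have y: "s \<le> y" "y \<le> s + h" using h by auto
      have "(t+h, y) \<in> U" "(t, y) \<in> U" using box[of "t+h" y] box[of t y] h y by auto
      then show "((\<lambda>y. f (t+h, y) - f (t, y)) has_real_derivative fs (t+h, y) - fs (t, y)) (at y)"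
        using dfs[of "t+h" y] dfs[of t y] by (intro derivative_intros) auto
    qed
    then show ?thesis using that h by auto
  qed
  obtain \<xi>' where \<xi>': "t \<le> \<xi>'" "\<xi>' \<le> t + h" "fs (t+h, \<eta>') - fs (t, \<eta>') = ((t+h) - t) * fst (\<xi>', \<eta>')"
  proof -
    have "\<exists>z. min t (t+h) \<le> z \<and> z \<le> max t (t+h) \<and>
      (\<lambda>x. fs (x, \<eta>')) (t+h) - (\<lambda>x. fs (x, \<eta>')) t = ((t+h) - t) * (\<lambda>x. fst (x, \<eta>')) z"
    proof (rule mvt_btw)
      fix x assume "min t (t + h) \<le> x" "x \<le> max t (t + h)"
      then have x: "t \<le> x" "x \<le> t + h" using h by auto
      have "(x, \<eta>') \<in> U" using box[OF x \<eta>'(1,2)] by auto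
      then show "((\<lambda>x. fs (x, \<eta>')) has_real_derivative fst (x, \<eta>')) (at x)"
        using dfst by blast
    qed
    then show ?thesis using that h by auto
  qed
  have "fst (\<xi>', \<eta>') > c" using box[OF \<xi>'(1,2) \<eta>'(1,2)] by auto
  then have D2: "D > h * h * c" using \<xi>'(3) \<eta>'(3) h unfolding D_def by (simp add: algebra_simps)
  show False using D1 D2 by simp
qed

lemma schwarz_eq:
  fixes f ft fs fts fst :: "real \<times> real \<Rightarrow> real"
  assumes U: "open U" "p \<in> U"
    and dft: "\<And>x y. (x,y)\<in>U \<Longrightarrow> ((\<lambda>x. f (x, y)) has_real_derivative ft (x,y)) (at x)"
    and dfs: "\<And>x y. (x,y)\<in>U \<Longrightarrow> ((\<lambda>y. f (x, y)) has_real_derivative fs (x,y)) (at y)"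
    and dfts: "\<And>x y. (x,y)\<in>U \<Longrightarrow> ((\<lambda>y. ft (x, y)) has_real_derivative fts (x,y)) (at y)"
    and dfst: "\<And>x y. (x,y)\<in>U \<Longrightarrow> ((\<lambda>x. fs (x, y)) has_real_derivative fst (x,y)) (at x)"
    and c1: "continuous_on U fts" and c2: "continuous_on U fst"
  shows "fts p = fst p"
proof -
  have "\<not> fts p < fst p" by (rule schwarz_lt[OF U dft dfs dfts dfst c1 c2])
  moreover have "\<not> (\<lambda>q. - fts q) p < (\<lambda>q. - fst q) p"
  proof (rule schwarz_lt[OF U, where f="\<lambda>q. - f q" and ft="\<lambda>q. - ft q" and fs="\<lambda>q. - fs q"])
    show "((\<lambda>x. - f (x, y)) has_real_derivative - ft (x, y)) (at x)" if "(x,y)\<in>U" for x y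
      using dft[OF that] by (rule DERIV_minus)
    show "((\<lambda>y. - f (x, y)) has_real_derivative - fs (x, y)) (at y)" if "(x,y)\<in>U" for x y
      using dfs[OF that] by (rule DERIV_minus)
    show "((\<lambda>y. - ft (x, y)) has_real_derivative - fts (x, y)) (at y)" if "(x,y)\<in>U" for x y
      using dfts[OF that] by (rule DERIV_minus)
    show "((\<lambda>x. - fs (x, y)) has_real_derivative - fst (x, y)) (at x)" if "(x,y)\<in>U" for x y
      using dfst[OF that] by (rule DERIV_minus)
  qed (use c1 c2 continuous_on_minus in auto)
  ultimately show ?thesis by simp
qed

lemma schwarz_vec:
  fixes g gt gs gts gst :: "real \<times> real \<Rightarrow> 'a::real_inner"
  assumes U: "open U" "p \<in> U"
    and dft: "\<And>x y. (x,y)\<in>U \<Longrightarrow> ((\<lambda>x. g (x, y)) has_vector_derivative gt (x,y)) (at x)"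
    and dfs: "\<And>x y. (x,y)\<in>U \<Longrightarrow> ((\<lambda>y. g (x, y)) has_vector_derivative gs (x,y)) (at y)"
    and dfts: "\<And>x y. (x,y)\<in>U \<Longrightarrow> ((\<lambda>y. gt (x, y)) has_vector_derivative gts (x,y)) (at y)"
    and dfst: "\<And>x y. (x,y)\<in>U \<Longrightarrow> ((\<lambda>x. gs (x, y)) has_vector_derivative gst (x,y)) (at x)"
    and c1: "continuous_on U gts" and c2: "continuous_on U gst"
  shows "gts p = gst p"
proof -
  define w where "w = gts p - gst p"
  have D: "((\<lambda>x. a x \<bullet> w) has_real_derivative a' \<bullet> w) (at x)"
    if "(a has_vector_derivative a') (at x)" for a a' x
    using vd_inner[OF that has_vector_derivative_const[of w]] by simp
  have "(\<lambda>q. gts q \<bullet> w) p = (\<lambda>q. gst q \<bullet> w) p"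
    by (rule schwarz_eq[OF U, where f="\<lambda>q. g q \<bullet> w" and ft="\<lambda>q. gt q \<bullet> w" and fs="\<lambda>q. gs q \<bullet> w"])
       (use dft dfs dfts dfst D c1 c2 in \<open>auto intro: continuous_intros\<close>)
  then have "w \<bullet> w = 0" unfolding w_def by (simp add: inner_diff_left)
  then show ?thesis unfolding w_def by simp
qed

lemma sm_cont: "smooth_on \<Omega> f \<Longrightarrow> g \<in> iterated_partials f \<Longrightarrow> continuous_on \<Omega> g"
  unfolding smooth_on_def by blast

lemma sm_vd_t:
  assumes "smooth_on \<Omega> f" "g \<in> iterated_partials f" "(x,y) \<in> \<Omega>"
  shows "((\<lambda>\<tau>. g (\<tau>, y)) has_vector_derivative pd_t g (x,y)) (at x)"
proof -
  have "(\<lambda>\<tau>. g (\<tau>, y)) differentiable (at x)" using assms unfolding smooth_on_def by fastforce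
  then show ?thesis unfolding pd_t_def by (simp add: vector_derivative_works)
qed

lemma sm_vd_s:
  assumes "smooth_on \<Omega> f" "g \<in> iterated_partials f" "(x,y) \<in> \<Omega>"
  shows "((\<lambda>\<sigma>. g (x, \<sigma>)) has_vector_derivative pd_s g (x,y)) (at y)"
proof -
  have "(\<lambda>\<sigma>. g (x, \<sigma>)) differentiable (at y)" using assms unfolding smooth_on_def by fastforce
  then show ?thesis unfolding pd_s_def by (simp add: vector_derivative_works)
qed

lemmas ip = iterated_partials.intros

lemma sm_schwarz:
  fixes f :: "real \<times> real \<Rightarrow> 'a::real_inner"
  assumes "smooth_on \<Omega> f" "open \<Omega>" "p \<in> \<Omega>"
  shows "pd_s (pd_t f) p = pd_t (pd_s f) p"
  by (rule schwarz_vec[OF assms(2,3), where g=f and gt="pd_t f" and gs="pd_s f"])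
     (auto intro!: sm_vd_t[OF assms(1)] sm_vd_s[OF assms(1)] sm_cont[OF assms(1)] ip)

lemma isCont_Q:
  fixes Ft Fs :: "real\<times>real\<Rightarrow>real"
  assumes a: "isCont Ft P" "isCont Fs P" "Fs P \<noteq> 0"
  shows "isCont (\<lambda>z. - Ft (fst z) / Fs (snd z)) (P,P)"
proof -
  have 1: "isCont (\<lambda>z. Ft (fst z)) (P,P)" using isCont_o2[where f=fst and a="(P,P)" and g=Ft] a by simp
  have 2: "isCont (\<lambda>z. Fs (snd z)) (P,P)" using isCont_o2[where f=snd and a="(P,P)" and g=Fs] a by simp
  show ?thesis using 1 2 a by (intro continuous_intros) auto
qed

lemma dist_pair_le2: "dist (a,b) (c,d) \<le> dist a c + dist b d"
  using sqrt_sum_squares_le_sum_abs[of "dist a c" "dist b d"] by (simp add: dist_Pair_Pair)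

lemma implicit1:
  fixes F Ft Fs :: "real \<times> real \<Rightarrow> real"
  assumes U: "open U" "(t0,s0) \<in> U" and F0: "F (t0,s0) = 0"
    and dFt: "\<And>x y. (x,y)\<in>U \<Longrightarrow> ((\<lambda>x. F (x, y)) has_real_derivative Ft (x,y)) (at x)"
    and dFs: "\<And>x y. (x,y)\<in>U \<Longrightarrow> ((\<lambda>y. F (x, y)) has_real_derivative Fs (x,y)) (at y)"
    and cFt: "continuous_on U Ft" and cFs: "continuous_on U Fs"
    and pos: "Fs (t0,s0) > 0"
  shows "\<exists>\<delta>>0. \<exists>\<epsilon>>0. \<exists>S :: real \<Rightarrow> real.
           {t0 - \<delta> <..< t0 + \<delta>} \<times> {s0 - \<epsilon> <..< s0 + \<epsilon>} \<subseteq> U \<and>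
           S t0 = s0 \<and>
           (\<forall>t \<in> {t0 - \<delta> <..< t0 + \<delta>}. S t \<in> {s0 - \<epsilon> <..< s0 + \<epsilon>} \<and>
              (S has_real_derivative (- Ft (t, S t) / Fs (t, S t))) (at t)) \<and>
           (\<forall>t \<in> {t0 - \<delta> <..< t0 + \<delta>}. \<forall>s \<in> {s0 - \<epsilon> <..< s0 + \<epsilon>}.
              F (t, s) = 0 \<longleftrightarrow> s = S t)"
proof -
  define m where "m = Fs (t0,s0) / 2"
  define M where "M = \<bar>Ft (t0,s0)\<bar> + 1"
  have m: "m > 0" using pos by (simp add: m_def)
  have M: "M > 0" by (simp add: M_def add_nonneg_pos)
  obtain d1 where d1: "d1 > 0" "\<And>q. dist q (t0,s0) < d1 \<Longrightarrow> q \<in> U \<and> Fs q > m"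
    using cont_ev_gt[OF cFs U, of m] pos m_def by auto
  obtain d2 where d2: "d2 > 0" "\<And>q. dist q (t0,s0) < d2 \<Longrightarrow> q \<in> U \<and> Ft q < M"
    using cont_ev[OF cFt U, of M] M_def by fastforce
  obtain d3 where d3: "d3 > 0" "\<And>q. dist q (t0,s0) < d3 \<Longrightarrow> q \<in> U \<and> Ft q > -M"
    using cont_ev_gt[OF cFt U, of "-M"] M_def by fastforce
  define e where "e = min d1 (min d2 d3) / 3"
  have e: "e > 0" using d1 d2 d3 by (simp add: e_def)
  have box: "(x,y) \<in> U \<and> Fs (x,y) > m \<and> \<bar>Ft (x,y)\<bar> < M"
    if "\<bar>x - t0\<bar> \<le> e" "\<bar>y - s0\<bar> \<le> e" for x y
  proof -
    have "dist (x,y) (t0,s0) \<le> \<bar>x - t0\<bar> + \<bar>y - s0\<bar>" by (rule dist_pair_le)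
    also have "... \<le> 2 * e" using that by auto
    also have "... < min d1 (min d2 d3)" using e d1(1) d2(1) d3(1) unfolding e_def by linarith
    finally show ?thesis using d1(2)[of "(x,y)"] d2(2)[of "(x,y)"] d3(2)[of "(x,y)"] by auto
  qed
  have mvty: "\<exists>\<eta>. \<bar>\<eta> - s0\<bar> \<le> e \<and> min y1 y2 \<le> \<eta> \<and> \<eta> \<le> max y1 y2 \<and>
      F (x, y2) - F (x, y1) = (y2 - y1) * Fs (x, \<eta>)"
    if "\<bar>x - t0\<bar> \<le> e" "\<bar>y1 - s0\<bar> \<le> e" "\<bar>y2 - s0\<bar> \<le> e" for x y1 y2
  proof -
    have "\<exists>z. min y1 y2 \<le> z \<and> z \<le> max y1 y2 \<and>
      (\<lambda>y. F (x, y)) y2 - (\<lambda>y. F (x, y)) y1 = (y2 - y1) * (\<lambda>y. Fs (x, y)) z"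
    proof (rule mvt_btw)
      fix y assume "min y1 y2 \<le> y" "y \<le> max y1 y2"
      then have "\<bar>y - s0\<bar> \<le> e" using that by auto
      then show "((\<lambda>y. F (x, y)) has_real_derivative Fs (x, y)) (at y)"
        using box[OF that(1)] dFs by blast
    qed
    then obtain z where "min y1 y2 \<le> z" "z \<le> max y1 y2" "F (x, y2) - F (x, y1) = (y2 - y1) * Fs (x, z)"
      by auto
    then show ?thesis using that by (intro exI[of _ z]) auto
  qed
  have mvtx: "\<exists>\<xi>. \<bar>\<xi> - x1\<bar> \<le> \<bar>x2 - x1\<bar> \<and> \<bar>\<xi> - t0\<bar> \<le> e \<and>
      F (x2, y) - F (x1, y) = (x2 - x1) * Ft (\<xi>, y)"
    if "\<bar>x1 - t0\<bar> \<le> e" "\<bar>x2 - t0\<bar> \<le> e" "\<bar>y - s0\<bar> \<le> e" for x1 x2 y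
  proof -
    have "\<exists>z. min x1 x2 \<le> z \<and> z \<le> max x1 x2 \<and>
      (\<lambda>x. F (x, y)) x2 - (\<lambda>x. F (x, y)) x1 = (x2 - x1) * (\<lambda>x. Ft (x, y)) z"
    proof (rule mvt_btw)
      fix x assume "min x1 x2 \<le> x" "x \<le> max x1 x2"
      then have "\<bar>x - t0\<bar> \<le> e" using that by auto
      then show "((\<lambda>x. F (x, y)) has_real_derivative Ft (x, y)) (at x)"
        using box[OF _ that(3)] dFt by blast
    qed
    then obtain z where "min x1 x2 \<le> z" "z \<le> max x1 x2" "F (x2, y) - F (x1, y) = (x2 - x1) * Ft (z, y)"
      by auto
    then show ?thesis using that by (intro exI[of _ z]) auto
  qed
  have incr: "F (x, y2) - F (x, y1) \<ge> m * (y2 - y1)"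
    if a: "\<bar>x - t0\<bar> \<le> e" "\<bar>y1 - s0\<bar> \<le> e" "\<bar>y2 - s0\<bar> \<le> e" "y1 \<le> y2" for x y1 y2
  proof -
    obtain \<eta> where "\<bar>\<eta> - s0\<bar> \<le> e" "F (x, y2) - F (x, y1) = (y2 - y1) * Fs (x, \<eta>)"
      using mvty[OF a(1-3)] by auto
    moreover have "Fs (x, \<eta>) > m" using box[OF a(1) \<open>\<bar>\<eta> - s0\<bar> \<le> e\<close>] by auto
    ultimately show ?thesis using a(4) mult_right_mono[of m "Fs (x, \<eta>)" "y2 - y1"] by (simp add: mult.commute)
  qed
  have lip: "\<bar>F (x2, y) - F (x1, y)\<bar> \<le> M * \<bar>x2 - x1\<bar>"
    if a: "\<bar>x1 - t0\<bar> \<le> e" "\<bar>x2 - t0\<bar> \<le> e" "\<bar>y - s0\<bar> \<le> e" for x1 x2 y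
  proof -
    obtain \<xi> where "\<bar>\<xi> - t0\<bar> \<le> e" "F (x2, y) - F (x1, y) = (x2 - x1) * Ft (\<xi>, y)"
      using mvtx[OF a] by auto
    moreover have "\<bar>Ft (\<xi>, y)\<bar> < M" using box[OF \<open>\<bar>\<xi> - t0\<bar> \<le> e\<close> a(3)] by auto
    ultimately show ?thesis using mult_right_mono[of "\<bar>Ft (\<xi>, y)\<bar>" M "\<bar>x2 - x1\<bar>"] by (simp add: abs_mult mult.commute)
  qed
  define \<delta> where "\<delta> = min e (m * e / (2 * M))"
  have \<delta>: "\<delta> > 0" "\<delta> \<le> e" "M * \<delta> \<le> m * e / 2" using e m M
    by (auto simp: \<delta>_def min_def field_simps)
  define I where "I = {t0 - \<delta> <..< t0 + \<delta>}"
  define J where "J = {s0 - e <..< s0 + e}"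
  have tI: "\<bar>t - t0\<bar> \<le> e" if "t \<in> I" for t using that \<delta> by (auto simp: I_def)
  have yJ: "\<bar>y - s0\<bar> \<le> e" if "y \<in> J" for y using that by (auto simp: J_def)
  have Fp: "F (t, s0 + e) > 0" if "t \<in> I" for t
  proof -
    have "F (t0, s0 + e) - F (t0, s0) \<ge> m * e" using incr[of t0 s0 "s0+e"] e by auto
    moreover have "\<bar>F (t, s0+e) - F (t0, s0+e)\<bar> \<le> M * \<bar>t - t0\<bar>" using lip[of t0 t "s0+e"] tI[OF that] e by auto
    moreover have "M * \<bar>t - t0\<bar> \<le> M * \<delta>"
    proof -
      have tt: "\<bar>t - t0\<bar> \<le> \<delta>" using that by (auto simp: I_def)
      show ?thesis using mult_left_mono[OF tt] M by simp
    qed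
    moreover have "m * e > 0" using m e by simp
    ultimately show ?thesis using F0 \<delta>(3) by linarith
  qed
  have Fn: "F (t, s0 - e) < 0" if "t \<in> I" for t
  proof -
    have "F (t0, s0) - F (t0, s0 - e) \<ge> m * e" using incr[of t0 "s0 - e" s0] e by auto
    moreover have "\<bar>F (t, s0-e) - F (t0, s0-e)\<bar> \<le> M * \<bar>t - t0\<bar>" using lip[of t0 t "s0-e"] tI[OF that] e by auto
    moreover have "M * \<bar>t - t0\<bar> \<le> M * \<delta>"
    proof -
      have tt: "\<bar>t - t0\<bar> \<le> \<delta>" using that by (auto simp: I_def)
      show ?thesis using mult_left_mono[OF tt] M by simp
    qed
    moreover have "m * e > 0" using m e by simp
    ultimately show ?thesis using F0 \<delta>(3) by linarith
  qed
  have ex: "\<exists>y. y \<in> J \<and> F (t, y) = 0" if tt: "t \<in> I" for t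
  proof -
    have "continuous_on {s0 - e..s0 + e} (\<lambda>y. F (t, y))"
    proof (rule continuous_at_imp_continuous_on, safe)
      fix y assume "y \<in> {s0 - e..s0 + e}"
      then have "\<bar>y - s0\<bar> \<le> e" by auto
      then show "isCont (\<lambda>y. F (t, y)) y" using box[OF tI[OF tt]] dFs DERIV_isCont by blast
    qed
    then obtain y where y: "y \<ge> s0 - e" "y \<le> s0 + e" "F (t, y) = 0"
      using IVT'[of "\<lambda>y. F (t, y)" "s0 - e" 0 "s0 + e"] Fp[OF tt] Fn[OF tt] e by force
    have "y \<noteq> s0 - e" "y \<noteq> s0 + e" using y Fp[OF tt] Fn[OF tt] by auto
    then show ?thesis using y by (intro exI[of _ y]) (auto simp: J_def)
  qed
  have uniq: "y1 = y2" if "t \<in> I" "\<bar>y1 - s0\<bar> \<le> e" "\<bar>y2 - s0\<bar> \<le> e" "F (t, y1) = 0" "F (t, y2) = 0" for t y1 y2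
  proof (rule ccontr)
    assume "y1 \<noteq> y2"
    then consider "y1 < y2" | "y2 < y1" by linarith
    then show False
    proof cases
      case 1 then have "m * (y2 - y1) > 0" using m by simp
      then show False using 1 incr[OF tI[OF that(1)] that(2,3)] that(4,5) by linarith
    next
      case 2 then have "m * (y1 - y2) > 0" using m by simp
      then show False using 2 incr[OF tI[OF that(1)] that(3,2)] that(4,5) by linarith
    qed
  qed
  define S where "S t = (SOME y. y \<in> J \<and> F (t, y) = 0)" for t
  have SJ: "S t \<in> J \<and> F (t, S t) = 0" if "t \<in> I" for t
    unfolding S_def using someI_ex[OF ex[OF that]] .
  have t0I: "t0 \<in> I" using \<delta> by (auto simp: I_def)
  have S0: "S t0 = s0" using uniq[OF t0I, of "S t0" s0] SJ[OF t0I] yJ e F0 by auto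
  have iff: "F (t, s) = 0 \<longleftrightarrow> s = S t" if "t \<in> I" "s \<in> J" for t s
    using uniq[OF that(1) yJ[OF that(2)] yJ[of "S t"]] SJ[OF that(1)] by auto
  have sub: "I \<times> J \<subseteq> U" using box tI yJ by auto
  have deriv: "(S has_real_derivative (- Ft (t, S t) / Fs (t, S t))) (at t)" if tI': "t \<in> I" for t
  proof -
    let ?P = "(t, S t)"
    have P: "\<bar>S t - s0\<bar> \<le> e" using SJ[OF tI'] yJ by auto
    have PU: "?P \<in> U" "Fs ?P > m" using box[OF tI[OF tI'] P] by auto
    have cQ: "isCont (\<lambda>z. - Ft (fst z) / Fs (snd z)) (?P, ?P)"
      by (rule isCont_Q) (use PU U cFt cFs m continuous_on_eq_continuous_at in auto)
    show ?thesis unfolding DERIV_def LIM_eq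
    proof (intro allI impI)
      fix r :: real assume r: "r > 0"
      obtain d where d: "d > 0" "\<And>z. dist z (?P, ?P) < d \<Longrightarrow>
          dist (- Ft (fst z) / Fs (snd z)) (- Ft (t, S t) / Fs (t, S t)) < r"
        using cQ[unfolded continuous_at_eps_delta, rule_format, OF r] by auto
      define K where "K = 1 + 2 * M / m"
      have K: "K > 0" using M m by (simp add: K_def add_pos_nonneg)
      define b where "b = min (min (t - (t0 - \<delta>)) ((t0 + \<delta>) - t)) (d / K)"
      have b: "b > 0" using tI' d K by (auto simp: b_def I_def)
      show "\<exists>s>0. \<forall>h. h \<noteq> 0 \<and> norm (h - 0) < s \<longrightarrow>
          norm ((S (t + h) - S t) / h - - Ft (t, S t) / Fs (t, S t)) < r"
      proof (intro exI[of _ b] conjI allI impI b)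
        fix h :: real assume h: "h \<noteq> 0 \<and> norm (h - 0) < b"
        have thI: "t + h \<in> I" using h by (auto simp: b_def I_def)
        define y' where "y' = S (t + h)"
        have y': "\<bar>y' - s0\<bar> \<le> e" "F (t+h, y') = 0" using SJ[OF thI] yJ unfolding y'_def by auto
        obtain \<xi> where \<xi>: "\<bar>\<xi> - t\<bar> \<le> \<bar>(t+h) - t\<bar>" "\<bar>\<xi> - t0\<bar> \<le> e"
            "F (t+h, y') - F (t, y') = ((t+h) - t) * Ft (\<xi>, y')"
          using mvtx[OF tI[OF tI'] tI[OF thI] y'(1)] by blast
        obtain \<eta> where \<eta>: "\<bar>\<eta> - s0\<bar> \<le> e" "min (S t) y' \<le> \<eta>" "\<eta> \<le> max (S t) y'"
            "F (t, y') - F (t, S t) = (y' - S t) * Fs (t, \<eta>)"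
          using mvty[OF tI[OF tI'] P y'(1)] by blast
        have Fse: "Fs (t, \<eta>) > m" using box[OF tI[OF tI'] \<eta>(1)] by auto
        have Fte: "\<bar>Ft (\<xi>, y')\<bar> < M" using box[OF \<xi>(2) y'(1)] by auto
        have eq: "(y' - S t) * Fs (t, \<eta>) = - h * Ft (\<xi>, y')"
          using \<xi>(3) \<eta>(4) y'(2) SJ[OF tI'] by (simp add: algebra_simps)
        have q: "(y' - S t) / h = - Ft (\<xi>, y') / Fs (t, \<eta>)"
          using eq Fse m h by (simp add: field_simps)
        have "\<bar>y' - S t\<bar> * m \<le> \<bar>y' - S t\<bar> * Fs (t, \<eta>)"
          using Fse by (simp add: mult_left_mono)
        also have "... = \<bar>h\<bar> * \<bar>Ft (\<xi>, y')\<bar>" using arg_cong[OF eq, of abs] Fse m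
          by (simp add: abs_mult)
        also have "... \<le> \<bar>h\<bar> * M" using Fte by (simp add: mult_left_mono)
        finally have ly: "\<bar>y' - S t\<bar> \<le> M / m * \<bar>h\<bar>" using m by (simp add: field_simps)
        have "dist ((\<xi>, y'), (t, \<eta>)) (?P, ?P) \<le> dist (\<xi>, y') ?P + dist (t, \<eta>) ?P"
          by (rule dist_pair_le2)
        also have "... \<le> (\<bar>\<xi> - t\<bar> + \<bar>y' - S t\<bar>) + (\<bar>t - t\<bar> + \<bar>\<eta> - S t\<bar>)"
          by (intro add_mono dist_pair_le)
        also have "... \<le> \<bar>h\<bar> + M / m * \<bar>h\<bar> + M / m * \<bar>h\<bar>"
        proof -
          have "\<bar>\<eta> - S t\<bar> \<le> \<bar>y' - S t\<bar>" using \<eta>(2,3) by (auto simp: min_def max_def split: if_splits)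
          then show ?thesis using \<xi>(1) ly by simp
        qed
        also have "... = K * \<bar>h\<bar>" by (simp add: K_def algebra_simps)
        also have "... < d" using h K by (simp add: b_def field_simps)
        finally have "dist (- Ft (\<xi>, y') / Fs (t, \<eta>)) (- Ft (t, S t) / Fs (t, S t)) < r"
          using d(2)[of "((\<xi>, y'), (t, \<eta>))"] by simp
        then show "norm ((S (t + h) - S t) / h - - Ft (t, S t) / Fs (t, S t)) < r"
          using q by (simp add: y'_def dist_norm)
      qed
    qed
  qed
  show ?thesis
    apply (rule exI[of _ \<delta>], rule conjI, fact)
    apply (rule exI[of _ e], rule conjI, fact)
    apply (rule exI[of _ S])
    using sub S0 SJ deriv iff unfolding I_def J_def by blast
qed

lemma deriv_zero_local:
  assumes "open \<Omega>" "(x,y) \<in> \<Omega>" "\<And>z. (x,z) \<in> \<Omega> \<Longrightarrow> f z = 0"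
    and "(f has_real_derivative D) (at y)"
  shows "D = 0"
proof -
  have o: "open (UNIV \<inter> (\<lambda>z. (x,z)) -` \<Omega>)"
    by (rule continuous_open_preimage) (auto intro: continuous_intros assms(1))
  have "((\<lambda>z. 0::real) has_real_derivative D) (at y)"
    by (rule has_field_derivative_transform_within_open[OF assms(4) o]) (use assms in auto)
  then show ?thesis using DERIV_const DERIV_unique by blast
qed

lemma vd_quot:
  fixes f :: "real \<Rightarrow> 'a::real_normed_vector"
  assumes "(f has_vector_derivative v) (at x)"
  shows "((\<lambda>y. (f y - f x) /\<^sub>R (y - x)) \<longlongrightarrow> v) (at x)"
proof -
  have N: "((\<lambda>y. norm ((f y - f x) - (y - x) *\<^sub>R v) / norm (y - x)) \<longlongrightarrow> 0) (at x)"
    using assms unfolding has_vector_derivative_def has_derivative_iff_norm by auto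
  have P: "norm ((f y - f x) - (y - x) *\<^sub>R v) / norm (y - x) = norm ((f y - f x) /\<^sub>R (y - x) - v)"
    if "y \<noteq> x" for y
  proof -
    have "(f y - f x) /\<^sub>R (y - x) - v = (1 / (y - x)) *\<^sub>R ((f y - f x) - (y - x) *\<^sub>R v)"
      using that by (simp add: scaleR_diff_right divide_inverse_commute)
    then show ?thesis using that by (simp add: divide_inverse_commute)
  qed
  have ev: "\<forall>\<^sub>F y in at x. norm ((f y - f x) - (y - x) *\<^sub>R v) / norm (y - x) = norm ((f y - f x) /\<^sub>R (y - x) - v)"
    unfolding eventually_at_filter by (rule always_eventually, intro allI impI, erule P)
  have "((\<lambda>y. norm ((f y - f x) /\<^sub>R (y - x) - v)) \<longlongrightarrow> 0) (at x)"
    using tendsto_cong[OF ev] N by simp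
  then have "((\<lambda>y. (f y - f x) /\<^sub>R (y - x) - v) \<longlongrightarrow> 0) (at x)"
    by (rule tendsto_norm_zero_iff[THEN iffD1])
  then show ?thesis by (rule LIM_zero_cancel)
qed

lemma neg_sc:
  fixes w :: "'a::real_normed_vector"
  assumes "a < 0" shows "(a *\<^sub>R w) /\<^sub>R norm (a *\<^sub>R w) = - (w /\<^sub>R norm w)"
proof -
  have "norm (a *\<^sub>R w) = (- a) * norm w" using assms by simp
  then have "(a *\<^sub>R w) /\<^sub>R norm (a *\<^sub>R w) = (a / ((- a) * norm w)) *\<^sub>R w" by (simp add: divide_inverse_commute)
  also have "a / ((- a) * norm w) = - (1 / norm w)" using assms by (cases "norm w = 0") (auto simp: field_simps)
  finally show ?thesis by (simp add: divide_inverse_commute)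
qed

lemma cusp_gen:
  fixes c c' :: "real \<Rightarrow> real^2"
  assumes e: "e > 0"
    and d: "\<And>s. s \<in> ball s0 e \<Longrightarrow> (c has_vector_derivative c' s) (at s)"
    and z: "c' s0 = 0" and nz: "\<And>s. s \<in> ball s0 e - {s0} \<Longrightarrow> c' s \<noteq> 0"
    and d2: "(c' has_vector_derivative v) (at s0)" and v: "v \<noteq> 0"
  shows "cusp_at c s0"
  unfolding cusp_at_def
proof (intro exI[of _ e] conjI ballI)
  show "e > 0" by fact
  show "c differentiable at s" if "s \<in> ball s0 e" for s using d[OF that] by (rule differentiableI_vector)
  have vd: "vector_derivative c (at s) = c' s" if "s \<in> ball s0 e" for s
    using d[OF that] by (rule vector_derivative_at)
  show "vector_derivative c (at s0) = 0" using vd[of s0] e z by simp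
  show "vector_derivative c (at s) \<noteq> 0" if "s \<in> ball s0 e - {s0}" for s
    using vd[of s] nz[OF that] that by auto
  define Q where "Q y = (c' y - c' s0) /\<^sub>R (y - s0)" for y
  have Qt: "(Q \<longlongrightarrow> v) (at s0)" unfolding Q_def by (rule vd_quot[OF d2])
  have Nt: "((\<lambda>y. Q y /\<^sub>R norm (Q y)) \<longlongrightarrow> v /\<^sub>R norm v) (at s0)"
    using Qt v by (intro tendsto_intros) auto
  let ?u = "v /\<^sub>R norm v"
  show "\<exists>u. u \<noteq> 0 \<and>
     ((\<lambda>s. vector_derivative c (at s) /\<^sub>R norm (vector_derivative c (at s))) \<longlongrightarrow> u) (at_right s0) \<and>
     ((\<lambda>s. vector_derivative c (at s) /\<^sub>R norm (vector_derivative c (at s))) \<longlongrightarrow> - u) (at_left s0)"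
  proof (intro exI[of _ ?u] conjI)
    show "?u \<noteq> 0" using v by simp
    have R: "((\<lambda>y. Q y /\<^sub>R norm (Q y)) \<longlongrightarrow> ?u) (at_right s0)"
      by (rule tendsto_mono[OF at_within_le_at Nt])
    have evR: "\<forall>\<^sub>F y in at_right s0. Q y /\<^sub>R norm (Q y) = vector_derivative c (at y) /\<^sub>R norm (vector_derivative c (at y))"
      unfolding eventually_at_right_field
    proof (intro exI[of _ "s0 + e"] conjI allI impI)
      show "s0 + e > s0" using e by simp
      fix y assume y: "s0 < y" "y < s0 + e"
      then have "y \<in> ball s0 e" by (auto simp: dist_real_def)
      then have "vector_derivative c (at y) = c' y" by (rule vd)
      moreover have "Q y = (1 / (y - s0)) *\<^sub>R c' y" using z by (simp add: Q_def divide_inverse_commute)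
      moreover have "1 / (y - s0) > 0" using y by simp
      ultimately show "Q y /\<^sub>R norm (Q y) = vector_derivative c (at y) /\<^sub>R norm (vector_derivative c (at y))"
        by (simp add: divide_inverse_commute)
    qed
    show "((\<lambda>s. vector_derivative c (at s) /\<^sub>R norm (vector_derivative c (at s))) \<longlongrightarrow> ?u) (at_right s0)"
      using tendsto_cong[OF evR] R by simp
    have L: "((\<lambda>y. - (Q y /\<^sub>R norm (Q y))) \<longlongrightarrow> - ?u) (at_left s0)"
      by (intro tendsto_minus tendsto_mono[OF at_within_le_at Nt])
    have evL: "\<forall>\<^sub>F y in at_left s0. - (Q y /\<^sub>R norm (Q y)) = vector_derivative c (at y) /\<^sub>R norm (vector_derivative c (at y))"
      unfolding eventually_at_left_field
    proof (intro exI[of _ "s0 - e"] conjI allI impI)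
      show "s0 - e < s0" using e by simp
      fix y assume y: "s0 - e < y" "y < s0"
      then have "y \<in> ball s0 e" by (auto simp: dist_real_def)
      then have "vector_derivative c (at y) = c' y" by (rule vd)
      moreover have "Q y = (1 / (y - s0)) *\<^sub>R c' y" using z by (simp add: Q_def divide_inverse_commute)
      moreover have "1 / (y - s0) < 0" using y by simp
      ultimately show "- (Q y /\<^sub>R norm (Q y)) = vector_derivative c (at y) /\<^sub>R norm (vector_derivative c (at y))"
        using neg_sc[of "1 / (y - s0)" "c' y"] by simp
    qed
    show "((\<lambda>s. vector_derivative c (at s) /\<^sub>R norm (vector_derivative c (at s))) \<longlongrightarrow> - ?u) (at_left s0)"
      using tendsto_cong[OF evL] L by simp
  qed
qed

lemma frechet2:
  fixes g gx gy :: "real \<times> real \<Rightarrow> 'a::real_normed_vector"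
  assumes X: "open X" and Y: "open Y" "convex Y" and xy: "x \<in> X" "y \<in> Y"
    and dx: "\<And>x y. x \<in> X \<Longrightarrow> y \<in> Y \<Longrightarrow> ((\<lambda>\<tau>. g (\<tau>, y)) has_vector_derivative gx (x,y)) (at x)"
    and dy: "\<And>x y. x \<in> X \<Longrightarrow> y \<in> Y \<Longrightarrow> ((\<lambda>\<sigma>. g (x, \<sigma>)) has_vector_derivative gy (x,y)) (at y)"
    and cy: "continuous_on (X \<times> Y) gy"
  shows "(g has_derivative (\<lambda>(h,k). h *\<^sub>R gx (x,y) + k *\<^sub>R gy (x,y))) (at (x,y))"
proof -
  have "((\<lambda>(x, y). g (x,y)) has_derivative (\<lambda>(tx, ty). tx *\<^sub>R gx (x,y) + blinfun_apply (blinfun_scaleR_left (gy (x,y))) ty))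
      (at (x, y) within X \<times> Y)"
  proof (rule has_derivative_partialsI[where f="\<lambda>x y. g (x,y)"])
    show "((\<lambda>xa. g (xa, y)) has_derivative (\<lambda>h. h *\<^sub>R gx (x, y))) (at x within X)"
      using dx[OF xy] unfolding has_vector_derivative_def by (rule has_derivative_at_withinI)
    show "((\<lambda>y. g (x, y)) has_derivative blinfun_apply (blinfun_scaleR_left (gy (x, y)))) (at y within Y)"
      if "x \<in> X" "y \<in> Y" for x y
      using dy[OF that] unfolding has_vector_derivative_def blinfun_scaleR_left.rep_eq
      by (rule has_derivative_at_withinI)
    have "continuous (at (x,y) within X \<times> Y) gy"
      using cy xy by (simp add: continuous_on_eq_continuous_within)
    then have "continuous (at (x,y) within X \<times> Y) (\<lambda>z. blinfun_scaleR_left (gy z))"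
      by (rule bounded_linear.continuous[OF bounded_linear_blinfun_scaleR_left])
    then show "continuous (at (x, y) within X \<times> Y) (\<lambda>(x, y). blinfun_scaleR_left (gy (x, y)))"
      by (simp add: case_prod_beta')
  qed (use Y xy in auto)
  moreover have "at (x,y) within X \<times> Y = at (x,y)" using X Y xy by (intro at_within_open) (auto intro: open_Times)
  ultimately show ?thesis by (simp add: blinfun_scaleR_left.rep_eq case_prod_beta')
qed

theorem proposition3p1:
  fixes \<gamma> :: "real \<times> real \<Rightarrow> real^2"
    and \<Omega> :: "(real \<times> real) set"
    and t0 s0 :: real
  assumes "open \<Omega>"
    and "smooth_on \<Omega> \<gamma>"
    and "\<forall>p \<in> \<Omega>. pd_t (pd_t \<gamma>) p = pd_s (pd_s \<gamma>) p"
    and "\<forall>p \<in> \<Omega>. pd_t \<gamma> p \<bullet> pd_s \<gamma> p = 0"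
    and "\<forall>p \<in> \<Omega>. (norm (pd_t \<gamma> p))\<^sup>2 + (norm (pd_s \<gamma> p))\<^sup>2 = 1"
    and "(t0, s0) \<in> \<Omega>"
    and "pd_s \<gamma> (t0, s0) = 0"
    and "pd_s (pd_s \<gamma>) (t0, s0) \<noteq> 0"
  shows "\<exists>\<delta>>0. \<exists>\<epsilon>>0. \<exists>S :: real \<Rightarrow> real.
           {t0 - \<delta> <..< t0 + \<delta>} \<times> {s0 - \<epsilon> <..< s0 + \<epsilon>} \<subseteq> \<Omega> \<and>
           S t0 = s0 \<and>
           (\<forall>t \<in> {t0 - \<delta> <..< t0 + \<delta>}.
              S t \<in> {s0 - \<epsilon> <..< s0 + \<epsilon>} \<and>
              (S has_real_derivative
                 (- (pd_s (pd_s \<gamma>) (t, S t) \<bullet> pd_s (pd_t \<gamma>) (t, S t))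
                    / (norm (pd_s (pd_s \<gamma>) (t, S t)))\<^sup>2)) (at t)) \<and>
           (\<forall>t \<in> {t0 - \<delta> <..< t0 + \<delta>}. \<forall>s \<in> {s0 - \<epsilon> <..< s0 + \<epsilon>}.
              pd_s \<gamma> (t, s) = 0 \<longleftrightarrow> s = S t) \<and>
           (\<forall>t \<in> {t0 - \<delta> <..< t0 + \<delta>}. cusp_at (\<lambda>\<sigma>. \<gamma> (t, \<sigma>)) (S t)) \<and>
           null_curve_on {t0 - \<delta> <..< t0 + \<delta>} (\<lambda>t. (t, \<gamma> (t, S t)))"
proof -
  note sm = assms(2)
  have vdt: "((\<lambda>\<tau>. g (\<tau>, y)) has_vector_derivative pd_t g (x,y)) (at x)"
    if "g \<in> iterated_partials \<gamma>" "(x,y) \<in> \<Omega>" for g x y using sm_vd_t[OF sm that] .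
  have vds: "((\<lambda>\<sigma>. g (x, \<sigma>)) has_vector_derivative pd_s g (x,y)) (at y)"
    if "g \<in> iterated_partials \<gamma>" "(x,y) \<in> \<Omega>" for g x y using sm_vd_s[OF sm that] .
  have cont: "continuous_on \<Omega> g" if "g \<in> iterated_partials \<gamma>" for g using sm_cont[OF sm that] .
  have ip1: "pd_t \<gamma> \<in> iterated_partials \<gamma>" "pd_s \<gamma> \<in> iterated_partials \<gamma>"
    "pd_s (pd_s \<gamma>) \<in> iterated_partials \<gamma>" "pd_t (pd_s \<gamma>) \<in> iterated_partials \<gamma>"
    "pd_s (pd_t \<gamma>) \<in> iterated_partials \<gamma>" "pd_t (pd_t \<gamma>) \<in> iterated_partials \<gamma>"
    "\<gamma> \<in> iterated_partials \<gamma>"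
    by (auto intro: ip)
  have crot: "continuous_on \<Omega> (\<lambda>q. rot (g q))" if "g \<in> iterated_partials \<gamma>" for g
    by (rule bounded_linear.continuous_on[OF rot_lin cont[OF that]])
  have orth: "pd_s (pd_t \<gamma>) (x,y) \<bullet> pd_s \<gamma> (x,y) + pd_t \<gamma> (x,y) \<bullet> pd_s (pd_s \<gamma>) (x,y) = 0"
    if xy: "(x,y) \<in> \<Omega>" for x y
  proof (rule deriv_zero_local[OF assms(1) xy, where f="\<lambda>z. pd_t \<gamma> (x,z) \<bullet> pd_s \<gamma> (x,z)"])
    show "pd_t \<gamma> (x,z) \<bullet> pd_s \<gamma> (x,z) = 0" if "(x,z) \<in> \<Omega>" for z using assms(4) that by blast
    show "((\<lambda>z. pd_t \<gamma> (x,z) \<bullet> pd_s \<gamma> (x,z)) has_real_derivative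
        pd_s (pd_t \<gamma>) (x,y) \<bullet> pd_s \<gamma> (x,y) + pd_t \<gamma> (x,y) \<bullet> pd_s (pd_s \<gamma>) (x,y)) (at y)"
      by (rule vd_inner[OF vds[OF ip1(1) xy] vds[OF ip1(2) xy]])
  qed
  have orth0: "pd_t \<gamma> q \<bullet> pd_s (pd_s \<gamma>) q = 0" if "q \<in> \<Omega>" "pd_s \<gamma> q = 0" for q
    using orth[of "fst q" "snd q"] that by simp
  have nt1: "(norm (pd_t \<gamma> q))\<^sup>2 = 1" if "q \<in> \<Omega>" "pd_s \<gamma> q = 0" for q
    using assms(5) that by auto
  define U where "U = (\<Omega> \<inter> pd_t \<gamma> -` (-{0})) \<inter> (\<Omega> \<inter> pd_s (pd_s \<gamma>) -` (-{0}))"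
  have Uo: "open U" unfolding U_def
    by (intro open_Int continuous_open_preimage cont ip1 assms(1)) auto
  have inU: "q \<in> U \<longleftrightarrow> q \<in> \<Omega> \<and> pd_t \<gamma> q \<noteq> 0 \<and> pd_s (pd_s \<gamma>) q \<noteq> 0" for q
    unfolding U_def by auto
  let ?p0 = "(t0, s0)"
  have nt0: "(norm (pd_t \<gamma> ?p0))\<^sup>2 = 1" using nt1 assms(6,7) by blast
  have p0U: "?p0 \<in> U" using inU assms(6,8) nt0 by auto
  have cnz: "pd_s (pd_s \<gamma>) q \<bullet> rot (pd_t \<gamma> q) \<noteq> 0" if "q \<in> U" "pd_s \<gamma> q = 0" for q
  proof -
    have q: "q \<in> \<Omega>" "pd_s (pd_s \<gamma>) q \<noteq> 0" using that inU by auto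
    have "(pd_s (pd_s \<gamma>) q \<bullet> pd_t \<gamma> q)\<^sup>2 + (pd_s (pd_s \<gamma>) q \<bullet> rot (pd_t \<gamma> q))\<^sup>2
        = (norm (pd_s (pd_s \<gamma>) q))\<^sup>2 * (norm (pd_t \<gamma> q))\<^sup>2" by (rule lagr)
    then have "(pd_s (pd_s \<gamma>) q \<bullet> rot (pd_t \<gamma> q))\<^sup>2 = (norm (pd_s (pd_s \<gamma>) q))\<^sup>2"
      using orth0[OF q(1) that(2)] nt1[OF q(1) that(2)] by (simp add: inner_commute)
    moreover have "(norm (pd_s (pd_s \<gamma>) q))\<^sup>2 > 0" using q(2) by simp
    ultimately show ?thesis by (metis power_zero_numeral less_irrefl)
  qed
  define c0 where "c0 = pd_s (pd_s \<gamma>) ?p0 \<bullet> rot (pd_t \<gamma> ?p0)"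
  have c0: "c0 \<noteq> 0" using cnz[OF p0U assms(7)] by (simp add: c0_def)
  define \<sigma> where "\<sigma> = sgn c0"
  have \<sigma>: "\<sigma> * c0 > 0" "\<sigma> \<noteq> 0" using c0 by (auto simp: \<sigma>_def sgn_real_def)
  define F where "F q = \<sigma> * (pd_s \<gamma> q \<bullet> rot (pd_t \<gamma> q))" for q
  define Ft where "Ft q = \<sigma> * (pd_t (pd_s \<gamma>) q \<bullet> rot (pd_t \<gamma> q) + pd_s \<gamma> q \<bullet> rot (pd_t (pd_t \<gamma>) q))" for q
  define Fs where "Fs q = \<sigma> * (pd_s (pd_s \<gamma>) q \<bullet> rot (pd_t \<gamma> q) + pd_s \<gamma> q \<bullet> rot (pd_s (pd_t \<gamma>) q))" for q
  have dFt: "((\<lambda>x. F (x, y)) has_real_derivative Ft (x, y)) (at x)" if "(x,y) \<in> U" for x y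
  proof -
    have xy: "(x,y) \<in> \<Omega>" using that inU by auto
    have b: "((\<lambda>\<tau>. rot (pd_t \<gamma> (\<tau>,y))) has_vector_derivative rot (pd_t (pd_t \<gamma>) (x,y))) (at x)"
      by (rule bounded_linear.has_vector_derivative[OF rot_lin vdt[OF ip1(1) xy]])
    show ?thesis unfolding F_def Ft_def
      by (rule DERIV_cmult[OF vd_inner[OF vdt[OF ip1(2) xy] b]])
  qed
  have dFs: "((\<lambda>y. F (x, y)) has_real_derivative Fs (x, y)) (at y)" if "(x,y) \<in> U" for x y
  proof -
    have xy: "(x,y) \<in> \<Omega>" using that inU by auto
    have b: "((\<lambda>\<tau>. rot (pd_t \<gamma> (x,\<tau>))) has_vector_derivative rot (pd_s (pd_t \<gamma>) (x,y))) (at y)"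
      by (rule bounded_linear.has_vector_derivative[OF rot_lin vds[OF ip1(1) xy]])
    show ?thesis unfolding F_def Fs_def
      by (rule DERIV_cmult[OF vd_inner[OF vds[OF ip1(2) xy] b]])
  qed
  have UO: "U \<subseteq> \<Omega>" using inU by auto
  have cFt: "continuous_on U Ft" unfolding Ft_def
    by (rule continuous_on_subset[OF _ UO]) (intro continuous_intros cont crot ip1)
  have cFs: "continuous_on U Fs" unfolding Fs_def
    by (rule continuous_on_subset[OF _ UO]) (intro continuous_intros cont crot ip1)
  have F0: "F ?p0 = 0" using assms(7) by (simp add: F_def)
  have pos: "Fs ?p0 > 0" using assms(7) \<sigma> by (simp add: Fs_def c0_def)
  obtain \<delta> \<epsilon> S where \<delta>: "\<delta> > 0" and \<epsilon>: "\<epsilon> > 0"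
    and box: "{t0 - \<delta> <..< t0 + \<delta>} \<times> {s0 - \<epsilon> <..< s0 + \<epsilon>} \<subseteq> U"
    and S0: "S t0 = s0"
    and SJ: "\<And>t. t \<in> {t0 - \<delta> <..< t0 + \<delta>} \<Longrightarrow> S t \<in> {s0 - \<epsilon> <..< s0 + \<epsilon>}"
    and Sd: "\<And>t. t \<in> {t0 - \<delta> <..< t0 + \<delta>} \<Longrightarrow> (S has_real_derivative (- Ft (t, S t) / Fs (t, S t))) (at t)"
    and Fiff: "\<And>t s. t \<in> {t0 - \<delta> <..< t0 + \<delta>} \<Longrightarrow> s \<in> {s0 - \<epsilon> <..< s0 + \<epsilon>} \<Longrightarrow> F (t, s) = 0 \<longleftrightarrow> s = S t"
    using implicit1[OF Uo p0U F0 dFt dFs cFt cFs pos] by blast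
  define I where "I = {t0 - \<delta> <..< t0 + \<delta>}"
  define J where "J = {s0 - \<epsilon> <..< s0 + \<epsilon>}"
  have PU: "(t, S t) \<in> U" if "t \<in> I" for t using box SJ[of t] that unfolding I_def by auto
  have PO: "(t, S t) \<in> \<Omega>" if "t \<in> I" for t using PU[OF that] UO by auto
  have zero: "pd_s \<gamma> (t, S t) = 0" if tI: "t \<in> I" for t
  proof (rule zero_of_perp[where b="pd_t \<gamma> (t, S t)"])
    have "F (t, S t) = 0" using Fiff[of t "S t"] SJ[of t] tI unfolding I_def by auto
    then show "pd_s \<gamma> (t, S t) \<bullet> rot (pd_t \<gamma> (t, S t)) = 0" using \<sigma> by (simp add: F_def)
    show "pd_s \<gamma> (t, S t) \<bullet> pd_t \<gamma> (t, S t) = 0" using assms(4) PO[OF tI] by (simp add: inner_commute)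
    show "pd_t \<gamma> (t, S t) \<noteq> 0" using PU[OF tI] inU by auto
  qed
  have iff2: "pd_s \<gamma> (t, s) = 0 \<longleftrightarrow> s = S t" if "t \<in> I" "s \<in> J" for t s
  proof
    assume "pd_s \<gamma> (t, s) = 0"
    then have "F (t, s) = 0" by (simp add: F_def)
    then show "s = S t" using Fiff that unfolding I_def J_def by blast
  next
    assume "s = S t" then show "pd_s \<gamma> (t, s) = 0" using zero[OF that(1)] by simp
  qed
  have deriv: "(S has_real_derivative
       (- (pd_s (pd_s \<gamma>) (t, S t) \<bullet> pd_s (pd_t \<gamma>) (t, S t)) / (norm (pd_s (pd_s \<gamma>) (t, S t)))\<^sup>2)) (at t)"
    if tI: "t \<in> I" for t
  proof -
    let ?P = "(t, S t)"
    have z: "pd_s \<gamma> ?P = 0" by (rule zero[OF tI])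
    have sw: "pd_s (pd_t \<gamma>) ?P = pd_t (pd_s \<gamma>) ?P" by (rule sm_schwarz[OF sm assms(1) PO[OF tI]])
    have fa: "pd_s (pd_t \<gamma>) ?P \<bullet> rot (pd_t \<gamma> ?P) / (pd_s (pd_s \<gamma>) ?P \<bullet> rot (pd_t \<gamma> ?P))
        = (pd_s (pd_s \<gamma>) ?P \<bullet> pd_s (pd_t \<gamma>) ?P) / (norm (pd_s (pd_s \<gamma>) ?P))\<^sup>2"
      by (rule final_alg[OF orth0[OF PO[OF tI] z] nt1[OF PO[OF tI] z] cnz[OF PU[OF tI] z]])
    have e1: "Ft ?P = \<sigma> * (pd_t (pd_s \<gamma>) ?P \<bullet> rot (pd_t \<gamma> ?P))" using z by (simp add: Ft_def)
    have e2: "Fs ?P = \<sigma> * (pd_s (pd_s \<gamma>) ?P \<bullet> rot (pd_t \<gamma> ?P))" using z by (simp add: Fs_def)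
    have fa': "pd_t (pd_s \<gamma>) ?P \<bullet> rot (pd_t \<gamma> ?P) / (pd_s (pd_s \<gamma>) ?P \<bullet> rot (pd_t \<gamma> ?P))
        = (pd_s (pd_s \<gamma>) ?P \<bullet> pd_s (pd_t \<gamma>) ?P) / (norm (pd_s (pd_s \<gamma>) ?P))\<^sup>2"
      using fa sw by simp
    have "- Ft ?P / Fs ?P = - (pd_t (pd_s \<gamma>) ?P \<bullet> rot (pd_t \<gamma> ?P) / (pd_s (pd_s \<gamma>) ?P \<bullet> rot (pd_t \<gamma> ?P)))"
      unfolding e1 e2 using \<sigma>(2) by (simp only: minus_divide_left mult_divide_mult_cancel_left_if if_False mult_minus_right[symmetric])
    also have "... = - (pd_s (pd_s \<gamma>) ?P \<bullet> pd_s (pd_t \<gamma>) ?P) / (norm (pd_s (pd_s \<gamma>) ?P))\<^sup>2"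
      unfolding fa' by (rule minus_divide_left)
    finally show ?thesis using Sd[of t] tI unfolding I_def by simp
  qed
  have cusp: "cusp_at (\<lambda>\<sigma>. \<gamma> (t, \<sigma>)) (S t)" if tI: "t \<in> I" for t
  proof -
    define e where "e = min (S t - (s0 - \<epsilon>)) ((s0 + \<epsilon>) - S t)"
    have e: "e > 0" using SJ[of t] tI by (auto simp: e_def I_def)
    have bJ: "s \<in> J" if "s \<in> ball (S t) e" for s using that by (auto simp: e_def J_def dist_real_def)
    have bO: "(t, s) \<in> \<Omega>" if "s \<in> ball (S t) e" for s
      using bJ[OF that] tI subsetD[OF box, of "(t,s)"] UO unfolding I_def J_def by auto
    show ?thesis
    proof (rule cusp_gen[OF e, where c'="\<lambda>\<sigma>. pd_s \<gamma> (t, \<sigma>)" and v="pd_s (pd_s \<gamma>) (t, S t)"])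
      show "((\<lambda>\<sigma>. \<gamma> (t, \<sigma>)) has_vector_derivative pd_s \<gamma> (t, s)) (at s)" if "s \<in> ball (S t) e" for s
        by (rule vds[OF ip1(7) bO[OF that]])
      show "pd_s \<gamma> (t, S t) = 0" by (rule zero[OF tI])
      show "pd_s \<gamma> (t, s) \<noteq> 0" if "s \<in> ball (S t) e - {S t}" for s
        using iff2[OF tI bJ, of s] that by auto
      show "((\<lambda>\<sigma>. pd_s \<gamma> (t, \<sigma>)) has_vector_derivative pd_s (pd_s \<gamma>) (t, S t)) (at (S t))"
        by (rule vds[OF ip1(2) PO[OF tI]])
      show "pd_s (pd_s \<gamma>) (t, S t) \<noteq> 0" using PU[OF tI] inU by auto
    qed
  qed
  have null: "null_curve_on I (\<lambda>t. (t, \<gamma> (t, S t)))" unfolding null_curve_on_def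
  proof (intro ballI conjI)
    fix t assume tI: "t \<in> I"
    let ?P = "(t, S t)"
    have IJ: "I \<times> J \<subseteq> \<Omega>" using box UO unfolding I_def J_def by auto
    have fr: "(\<gamma> has_derivative (\<lambda>(h,k). h *\<^sub>R pd_t \<gamma> ?P + k *\<^sub>R pd_s \<gamma> ?P)) (at ?P)"
    proof (rule frechet2[where X=I and Y=J])
      show "open I" "open J" "convex J" by (auto simp: I_def J_def)
      show "t \<in> I" "S t \<in> J" using tI SJ[of t] by (auto simp: I_def J_def)
      show "((\<lambda>\<tau>. \<gamma> (\<tau>, y)) has_vector_derivative pd_t \<gamma> (x, y)) (at x)" if "x \<in> I" "y \<in> J" for x y
        using vdt[OF ip1(7)] IJ that by blast
      show "((\<lambda>\<sigma>. \<gamma> (x, \<sigma>)) has_vector_derivative pd_s \<gamma> (x, y)) (at y)" if "x \<in> I" "y \<in> J" for x y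
        using vds[OF ip1(7)] IJ that by blast
      show "continuous_on (I \<times> J) (pd_s \<gamma>)" by (rule continuous_on_subset[OF cont[OF ip1(2)] IJ])
    qed
    define S' where "S' = - (pd_s (pd_s \<gamma>) ?P \<bullet> pd_s (pd_t \<gamma>) ?P) / (norm (pd_s (pd_s \<gamma>) ?P))\<^sup>2"
    have Sd': "(S has_derivative (*) S') (at t)"
      using deriv[OF tI] unfolding has_field_derivative_def S'_def .
    have pd: "((\<lambda>\<tau>. (\<tau>, S \<tau>)) has_derivative (\<lambda>h. (h, S' * h))) (at t)"
      by (rule has_derivative_Pair[OF has_derivative_ident Sd'])
    have ch: "((\<lambda>\<tau>. \<gamma> (\<tau>, S \<tau>)) has_derivative (\<lambda>h. h *\<^sub>R pd_t \<gamma> ?P)) (at t)"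
    proof -
      have "(\<gamma> \<circ> (\<lambda>\<tau>. (\<tau>, S \<tau>)) has_derivative (\<lambda>(h,k). h *\<^sub>R pd_t \<gamma> ?P + k *\<^sub>R pd_s \<gamma> ?P) \<circ> (\<lambda>h. (h, S' * h))) (at t)"
        by (rule diff_chain_at[OF pd]) (use fr in simp)
      then show ?thesis using zero[OF tI] by (simp add: o_def)
    qed
    have cd: "((\<lambda>t. (t, \<gamma> (t, S t))) has_vector_derivative (1, pd_t \<gamma> ?P)) (at t)"
      using ch unfolding has_vector_derivative_def
      by (intro has_derivative_Pair[OF has_derivative_ident, THEN has_derivative_eq_rhs]) auto
    show "(\<lambda>t. (t, \<gamma> (t, S t))) differentiable at t" using cd by (rule differentiableI_vector)
    have vd: "vector_derivative (\<lambda>t. (t, \<gamma> (t, S t))) (at t) = (1, pd_t \<gamma> ?P)" using cd by (rule vector_derivative_at)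
    show "vector_derivative (\<lambda>t. (t, \<gamma> (t, S t))) (at t) \<noteq> 0" using vd by (simp add: zero_prod_def)
    show "mink_q (vector_derivative (\<lambda>t. (t, \<gamma> (t, S t))) (at t)) = 0"
      using vd nt1[OF PO[OF tI] zero[OF tI]] by (simp add: mink_q_def)
  qed
  show ?thesis
  proof (rule exI[of _ \<delta>], rule conjI[OF \<delta>], rule exI[of _ \<epsilon>], rule conjI[OF \<epsilon>], rule exI[of _ S], intro conjI)
    show "{t0 - \<delta><..<t0 + \<delta>} \<times> {s0 - \<epsilon><..<s0 + \<epsilon>} \<subseteq> \<Omega>" using box UO by auto
    show "S t0 = s0" by fact
    show "\<forall>t\<in>{t0 - \<delta><..<t0 + \<delta>}. S t \<in> {s0 - \<epsilon><..<s0 + \<epsilon>} \<and>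
      (S has_real_derivative - (pd_s (pd_s \<gamma>) (t, S t) \<bullet> pd_s (pd_t \<gamma>) (t, S t)) / (norm (pd_s (pd_s \<gamma>) (t, S t)))\<^sup>2) (at t)"
      using SJ deriv unfolding I_def by blast
    show "\<forall>t\<in>{t0 - \<delta><..<t0 + \<delta>}. \<forall>s\<in>{s0 - \<epsilon><..<s0 + \<epsilon>}. (pd_s \<gamma> (t, s) = 0) = (s = S t)"
      using iff2 unfolding I_def J_def by blast
    show "\<forall>t\<in>{t0 - \<delta><..<t0 + \<delta>}. cusp_at (\<lambda>\<sigma>. \<gamma> (t, \<sigma>)) (S t)" using cusp unfolding I_def by blast
    show "null_curve_on {t0 - \<delta><..<t0 + \<delta>} (\<lambda>t. (t, \<gamma> (t, S t)))" using null unfolding I_def .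
  qed
qed

end
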